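(* The string rewriting system $\mathcal{F}=D_F\cup A\cup B$ is terminating, where $D_F=\{1_3\rhd\to\rhd,\ 0_30_2\rhd\to 0_3\rhd,\ 1_30_2\rhd\to1_3\rhd,\ 1_31_2\rhd\to1_32_3\rhd,\ 2_31_2\rhd\to2_32_3\rhd\}$.
   Context: An SRS induces $u\ell v\to urv$ for each rule $\ell\to r$; terminating means no infinite rewrite sequence. Alphabet $\{0_2,1_2,0_3,1_3,2_3,\lhd,\rhd\}$; $A=\{0_20_3\to0_30_2,\ 0_21_3\to0_31_2,\ 0_22_3\to1_30_2,\ 1_20_3\to1_31_2,\ 1_21_3\to2_30_2,\ 1_22_3\to2_31_2\}$; $B=\{\lhd0_3\to\lhd1_2,\ \lhd1_3\to\lhd0_20_2,\ \lhd2_3\to\lhd0_21_2\}$. *)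

theory Defs
  imports Main
begin

text \<open>Alphabet: Z2/O2 are 0_2,1_2; Z3/O3/T3 are 0_3,1_3,2_3; LM is the left marker, RM the right marker.\<close>
datatype sym = Z2 | O2 | Z3 | O3 | T3 | LM | RM

type_synonym srs = "(sym list \<times> sym list) set"

definition rstep :: "srs \<Rightarrow> (sym list \<times> sym list) set" where
  "rstep R = {(u @ l @ v, u @ r @ v) | u l r v. (l, r) \<in> R}"

definition terminating :: "srs \<Rightarrow> bool" where
  "terminating R \<longleftrightarrow> \<not> (\<exists>f :: nat \<Rightarrow> sym list. \<forall>i. (f i, f (Suc i)) \<in> rstep R)"

definition A_rules :: srs where
  "A_rules = {([Z2, Z3], [Z3, Z2]), ([Z2, O3], [Z3, O2]), ([Z2, T3], [O3, Z2]),
              ([O2, Z3], [O3, O2]), ([O2, O3], [T3, Z2]), ([O2, T3], [T3, O2])}"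

definition B_rules :: srs where
  "B_rules = {([LM, Z3], [LM, O2]), ([LM, O3], [LM, Z2, Z2]), ([LM, T3], [LM, Z2, O2])}"

definition DF_rules :: srs where
  "DF_rules = {([O3, RM], [RM]), ([Z3, Z2, RM], [Z3, RM]), ([O3, Z2, RM], [O3, RM]),
               ([O3, O2, RM], [O3, T3, RM]), ([T3, O2, RM], [T3, T3, RM])}"

end

theory Submission
  imports Defs
begin


definition FF :: "nat \<Rightarrow> nat" where
"FF n = (if n mod 3 = 1 then (n - 1) div 3 else if even n then n div 2 else (3*n+1) div 2)"

lemma FF_down: "odd m \<Longrightarrow> FF ((3*m - 1) div 2) = (m - 1) div 2"
proof -
  assume "odd m" then obtain t where t: "m = 2*t+1" by (metis oddE)
  have "(3*m - 1) div 2 = 3*t+1" using t by simp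
  then show ?thesis using t by (simp add: FF_def)
qed

lemma down3: "odd c \<Longrightarrow> \<exists>k. (FF^^k) ((3^j*c - 1) div 2) = (c - 1) div 2"
proof (induction j)
  case 0 then show ?case by (intro exI[of _ 0]) simp
next
  case (Suc j)
  then obtain k where k: "(FF^^k) ((3^j*c - 1) div 2) = (c - 1) div 2" by blast
  have "odd (3^j*c)" using Suc.prems by simp
  then have "FF ((3*(3^j*c) - 1) div 2) = (3^j*c - 1) div 2" by (rule FF_down)
  then have "(FF^^(Suc k)) ((3^Suc j*c - 1) div 2) = (c - 1) div 2"
    using k by (simp add: funpow_Suc_right mult.assoc del: funpow.simps)
  then show ?case by blast
qed

lemma FF_up: "m \<ge> 1 \<Longrightarrow> (2*m - 1) mod 3 \<noteq> 1 \<Longrightarrow> FF (2*m - 1) = 3*m - 1"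
proof -
  assume a: "m \<ge> 1" "(2*m - 1) mod 3 \<noteq> 1"
  have "odd (2*m - 1)" using a(1) by simp
  then show ?thesis using a by (simp add: FF_def)
qed

lemma up: "a \<ge> 1 \<Longrightarrow> odd c \<Longrightarrow> (2^a*c - 1) mod 3 \<noteq> 1 \<Longrightarrow>
   \<exists>k. (FF^^k) (2^a*c - 1) = (3^a*c - 1) div 2"
proof (induction a arbitrary: c rule: dec_induct)
  case base
  have c1: "c \<ge> 1" using base by (cases c) auto
  have e1: "FF (2*c - 1) = 3*c - 1" using FF_up[of c] base c1 by simp
  obtain t where t: "c = 2*t+1" using base by (metis oddE)
  have e2: "FF (3*c - 1) = (3*c - 1) div 2" using t by (simp add: FF_def) presburger
  have "(FF^^2) (2^1*c - 1) = (3^1*c - 1) div 2" using e1 e2 by (simp add: numeral_2_eq_2)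
  then show ?case by blast
next
  case (step a)
  have c1: "c \<ge> 1" using step by (cases c) auto
  have p: "(2::nat)^a \<ge> 1" by simp
  have m1: "2^a*c \<ge> (1::nat)" using p c1 by (simp add: Suc_le_eq)
  have e1: "FF (2*(2^a*c) - 1) = 3*(2^a*c) - 1" using FF_up[of "2^a*c"] step m1 by (simp add: mult.assoc)
  have o3: "odd (3*c)" using step by simp
  have md: "(2^a*(3*c) - 1) mod 3 \<noteq> 1"
  proof -
    have q: "2^a*(3*c) = 3*(2^a*c)" by simp
    have "\<And>x::nat. x \<ge> 1 \<Longrightarrow> 3*x - 1 = 3*(x - 1) + 2" by (case_tac x) auto
    then have e: "2^a*(3*c) - 1 = 3*(2^a*c - 1) + 2" using m1 q by metis
    have g: "\<And>y::nat. (3*y+2) mod 3 = 2" by presburger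
    have "(3*(2^a*c - 1) + 2) mod 3 = (2::nat)" by (rule g)
    then show ?thesis unfolding e by simp
  qed
  obtain k where k: "(FF^^k) (2^a*(3*c) - 1) = (3^a*(3*c) - 1) div 2" using step.IH[OF o3 md] by blast
  have "(FF^^(Suc k)) (2^Suc a*c - 1) = (3^Suc a*c - 1) div 2"
    using k e1 by (simp add: funpow_Suc_right mult.assoc mult.left_commute del: funpow.simps)
  then show ?case by blast
qed

lemma twopow: "y > 0 \<Longrightarrow> \<exists>a c. y = 2^a*(c::nat) \<and> odd c"
proof (induction y rule: less_induct)
  case (less y)
  show ?case
  proof (cases "even y")
    case True
    then obtain z where z: "y = 2*z" by blast
    then have "z < y" "z > 0" using less.prems by auto
    then obtain a c where "z = 2^a*c" "odd c" using less.IH by blast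
    then show ?thesis using z by (intro exI[of _ "Suc a"] exI[of _ c]) simp
  next
    case False then show ?thesis by (intro exI[of _ 0] exI[of _ y]) simp
  qed
qed

lemma descent: "n > 0 \<Longrightarrow> \<exists>k. (FF^^k) n < n"
proof -
  assume n: "n > 0"
  show ?thesis
  proof (cases "n mod 3 = 1 \<or> even n")
    case True
    then have "FF n < n" using n by (auto simp: FF_def)
    then show ?thesis by (intro exI[of _ 1]) simp
  next
    case False
    then have o: "odd n" and m3: "n mod 3 \<noteq> 1" by auto
    obtain a c where ac: "n + 1 = 2^a*c" "odd c" using twopow[of "n+1"] by auto
    have a1: "a \<ge> 1" using ac o by (cases a) auto
    have nn: "n = 2^a*c - 1" using ac by simp
    obtain k1 where k1: "(FF^^k1) n = (3^a*c - 1) div 2" using up[OF a1 ac(2)] nn m3 by auto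
    obtain k2 where k2: "(FF^^k2) ((3^a*c - 1) div 2) = (c - 1) div 2" using down3[OF ac(2)] by blast
    have "(FF^^(k2 + k1)) n = (c - 1) div 2" using k1 k2 by (simp add: funpow_add)
    moreover have "(c - 1) div 2 < n"
    proof -
      have "(2::nat)^a \<ge> 2" using a1 by (metis one_less_numeral_iff power_increasing_iff semiring_norm(76) power_one_right)
      then have "2^a*c \<ge> 2*c" by simp
      then have "2*c \<le> n + 1" using ac(1) by simp
      moreover have "(c - 1) div 2 \<le> c" by simp
      moreover have "c \<ge> 1" using ac(2) by (cases c) auto
      ultimately show ?thesis by linarith
    qed
    ultimately show ?thesis by metis
  qed
qed

lemma conv: "\<exists>k. (FF^^k) n = 0"
proof (induction n rule: less_induct)
  case (less n)
  show ?case
  proof (cases "n = 0")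
    case True then show ?thesis by (intro exI[of _ 0]) simp
  next
    case False
    then obtain k where k: "(FF^^k) n < n" using descent by blast
    then obtain j where "(FF^^j) ((FF^^k) n) = 0" using less.IH by blast
    then have "(FF^^(j+k)) n = 0" by (simp add: funpow_add)
    then show ?thesis by blast
  qed
qed

definition KK :: "nat \<Rightarrow> nat" where "KK n = (LEAST k. (FF^^k) n = 0)"
definition HH :: "nat \<Rightarrow> nat" where "HH n = (\<Sum>j<KK n. ((FF^^(Suc j)) n)^2 + 1)"

lemma KK_step: "n \<noteq> 0 \<Longrightarrow> KK n = Suc (KK (FF n))"
proof -
  assume n: "n \<noteq> 0"
  obtain k where k: "(FF^^k) n = 0" using conv by blast
  have "KK n = Suc (LEAST m. (FF^^(Suc m)) n = 0)"
    unfolding KK_def by (rule Least_Suc[where P="\<lambda>k. (FF^^k) n = 0", OF k]) (simp add: n)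
  also have "(\<lambda>m. (FF^^(Suc m)) n = 0) = (\<lambda>m. (FF^^m) (FF n) = 0)"
    by (simp add: funpow_Suc_right del: funpow.simps)
  finally show ?thesis unfolding KK_def by simp
qed

lemma HH_step: "n \<noteq> 0 \<Longrightarrow> HH n = (FF n)^2 + 1 + HH (FF n)"
proof -
  assume n: "n \<noteq> 0"
  have "HH n = (\<Sum>j<Suc (KK (FF n)). ((FF^^(Suc j)) n)^2 + 1)"
    unfolding HH_def using KK_step[OF n] by simp
  also have "\<dots> = ((FF^^1) n)^2 + 1 + (\<Sum>j<KK (FF n). ((FF^^(Suc (Suc j))) n)^2 + 1)"
    by (subst sum.lessThan_Suc_shift) simp
  also have "(\<Sum>j<KK (FF n). ((FF^^(Suc (Suc j))) n)^2 + 1) = HH (FF n)"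
    unfolding HH_def by (simp add: funpow_Suc_right del: funpow.simps)
  finally show ?thesis by simp
qed



fun isb :: "sym \<Rightarrow> bool" where
  "isb Z2 = True" | "isb O2 = True" | "isb _ = False"
fun ist :: "sym \<Rightarrow> bool" where
  "ist Z3 = True" | "ist O3 = True" | "ist T3 = True" | "ist _ = False"

definition nb :: "sym list \<Rightarrow> nat" where "nb s = length (filter isb s)"
definition nt :: "sym list \<Rightarrow> nat" where "nt s = length (filter ist s)"

fun ninv :: "sym list \<Rightarrow> nat" where
  "ninv [] = 0"
| "ninv (x # xs) = (if isb x then nt xs else 0) + ninv xs"

lemma nb_simps[simp]: "nb [] = 0" "nb (x#xs) = (if isb x then Suc (nb xs) else nb xs)" "nb (xs@ys) = nb xs + nb ys"
  by (auto simp: nb_def)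
lemma nt_simps[simp]: "nt [] = 0" "nt (x#xs) = (if ist x then Suc (nt xs) else nt xs)" "nt (xs@ys) = nt xs + nt ys"
  by (auto simp: nt_def)

lemma ninv_append[simp]: "ninv (xs@ys) = ninv xs + ninv ys + nb xs * nt ys"
  by (induction xs) auto

lemma ninv_le: "ninv s \<le> nb s * nt s"
proof (induction s)
  case (Cons x s) then show ?case by (cases x) auto
qed simp

fun dstep :: "nat \<Rightarrow> sym \<Rightarrow> nat" where
  "dstep v Z2 = 2*v" | "dstep v O2 = 2*v+1" | "dstep v Z3 = 3*v" | "dstep v O3 = 3*v+1"
| "dstep v T3 = 3*v+2" | "dstep v LM = v" | "dstep v RM = v"

definition ev :: "nat \<Rightarrow> sym list \<Rightarrow> nat" where "ev v s = foldl dstep v s"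

lemma ev_simps[simp]: "ev v [] = v" "ev v (x#xs) = ev (dstep v x) xs" "ev v (xs@ys) = ev (ev v xs) ys"
  by (auto simp: ev_def)

lemma ev_ge: "v \<ge> 1 \<Longrightarrow> ev v s \<ge> v + nb s + nt s"
proof (induction s arbitrary: v)
  case (Cons x s)
  have "dstep v x \<ge> 1" using Cons.prems by (cases x) auto
  then have "ev (dstep v x) s \<ge> dstep v x + nb s + nt s" using Cons.IH by blast
  then show ?case using Cons.prems by (cases x) auto
qed simp

lemma bound: "ninv s + (nt s)^2 \<le> (ev 1 s)^2"
proof -
  have "ninv s + (nt s)^2 \<le> nb s * nt s + nt s * nt s" using ninv_le[of s] by (simp add: power2_eq_square)
  also have "\<dots> \<le> (nb s + nt s) * (nb s + nt s)" by (simp add: algebra_simps)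
  also have "\<dots> \<le> ev 1 s * ev 1 s" using ev_ge[of 1 s] by (intro mult_mono) auto
  finally show ?thesis by (simp add: power2_eq_square)
qed

definition phi :: "bool \<Rightarrow> sym list \<Rightarrow> bool \<Rightarrow> nat" where
 "phi lf s rf = ninv s + (if lf then (nt s)^2 else 0) +
     (if rf then (if lf then HH (ev 1 s) else 2 * (nb s)^2 + nt s) else 0)"


lemma ev_A: "(l, r) \<in> A_rules \<Longrightarrow> ev v l = ev v r"
  unfolding A_rules_def by auto
lemma phi_gen: "ev 1 (a@l@b) = ev 1 (a@r@b) \<Longrightarrow> nb l = nb r \<Longrightarrow> nt l = nt r \<Longrightarrow> ninv r < ninv l
  \<Longrightarrow> phi lf (a @ r @ b) rf < phi lf (a @ l @ b) rf"
  unfolding phi_def by simp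
lemma phi_A: "(l, r) \<in> A_rules \<Longrightarrow> phi lf (a @ r @ b) rf < phi lf (a @ l @ b) rf"
  apply (rule phi_gen)
  apply (simp add: ev_A)
  unfolding A_rules_def by auto
lemma phi_B: "(LM # l, LM # r) \<in> B_rules \<Longrightarrow> phi True (r @ b) rf < phi True (l @ b) rf"
  unfolding B_rules_def phi_def
  apply (simp only: insert_iff empty_iff prod.inject list.inject)
  apply (elim disjE conjE; simp add: power2_eq_square)
  done

lemma FF1: "FF (3*n+1) = n" by (simp add: FF_def)
lemma FF2: "FF (2*(3*n)) = 3*n" by (simp add: FF_def)
lemma FF3: "FF (2*(3*n+1)) = 3*n+1" unfolding FF_def by presburger
lemma FF4: "FF (2*(3*n+1)+1) = 3*(3*n+1)+2" by (simp add: FF_def)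
lemma FF5: "FF (2*(3*n+2)+1) = 3*(3*n+2)+2" unfolding FF_def by presburger

lemma DFcases: "(l @ [RM], r @ [RM]) \<in> DF_rules \<Longrightarrow> (l = [O3] \<and> r = []) \<or> (l = [Z3,Z2] \<and> r = [Z3]) \<or> (l = [O3,Z2] \<and> r = [O3])
       \<or> (l = [O3,O2] \<and> r = [O3,T3]) \<or> (l = [T3,O2] \<and> r = [T3,T3])"
  unfolding DF_rules_def by auto

lemma phi_D: "(l @ [RM], r @ [RM]) \<in> DF_rules \<Longrightarrow> phi lf (a @ r) True < phi lf (a @ l) True"
proof -
  assume R: "(l @ [RM], r @ [RM]) \<in> DF_rules"
  have n1: "ev 1 a \<ge> 1" using ev_ge[of 1 a] by simp
  have F: "ev 1 (a @ r) = FF (ev 1 (a @ l))"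
    using DFcases[OF R] by (auto simp only: ev_simps dstep.simps FF1 FF2 FF3 FF4 FF5)
  have nz: "ev 1 (a @ l) \<noteq> 0"
    using ev_ge[of "ev 1 a" l] n1 by simp
  show ?thesis
  proof (cases lf)
    case True
    have "phi lf (a @ r) True = ninv (a@r) + (nt (a@r))^2 + HH (ev 1 (a@r))" using True by (simp add: phi_def)
    also have "\<dots> \<le> (ev 1 (a@r))^2 + HH (ev 1 (a@r))" using bound[of "a@r"] by linarith
    also have "\<dots> < HH (ev 1 (a@l))" using HH_step[OF nz] F by simp
    also have "\<dots> \<le> phi lf (a @ l) True" using True by (simp add: phi_def)
    finally show ?thesis .
  next
    case False
    show ?thesis using DFcases[OF R] False
      by (elim disjE conjE; simp add: phi_def power2_eq_square algebra_simps)
  qed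
qed


definition dg :: "sym \<Rightarrow> bool" where "dg x \<longleftrightarrow> x \<noteq> LM \<and> x \<noteq> RM"

fun Ph :: "bool \<Rightarrow> sym list \<Rightarrow> sym list \<Rightarrow> nat" where
  "Ph lf acc [] = phi lf acc False"
| "Ph lf acc (x # xs) = (if x = LM \<or> x = RM then phi lf acc (x = RM) + Ph (x = LM) [] xs
      else Ph lf (acc @ [x]) xs)"

lemma Ph_digits: "\<forall>x\<in>set s. dg x \<Longrightarrow> Ph lf acc (s @ z) = Ph lf (acc @ s) z"
  by (induction s arbitrary: acc) (auto simp: dg_def)

lemma Ph_left: "\<exists>C lf' acc'. \<forall>z. Ph lf acc (u @ z) = C + Ph lf' acc' z"
proof (induction u arbitrary: lf acc)
  case Nil then show ?case by (intro exI[of _ 0] exI[of _ lf] exI[of _ acc]) simp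
next
  case (Cons x u)
  show ?case
  proof (cases "x = LM \<or> x = RM")
    case True
    obtain C lf' acc' where h: "\<forall>z. Ph (x = LM) [] (u @ z) = C + Ph lf' acc' z" using Cons.IH by blast
    show ?thesis using True h by (intro exI[of _ "phi lf acc (x = RM) + C"] exI[of _ lf'] exI[of _ acc']) auto
  next
    case False
    obtain C lf' acc' where h: "\<forall>z. Ph lf (acc @ [x]) (u @ z) = C + Ph lf' acc' z" using Cons.IH by blast
    show ?thesis using False h by (intro exI[of _ C] exI[of _ lf'] exI[of _ acc']) auto
  qed
qed

lemma Ph_right: "\<exists>v1 rf C. \<forall>lf acc. Ph lf acc v = phi lf (acc @ v1) rf + C"
proof (induction v)
  case Nil then show ?case by (intro exI[of _ "[]"] exI[of _ False] exI[of _ 0]) simp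
next
  case (Cons x v)
  show ?case
  proof (cases "x = LM \<or> x = RM")
    case True
    show ?thesis using True by (intro exI[of _ "[]"] exI[of _ "x = RM"] exI[of _ "Ph (x = LM) [] v"]) auto
  next
    case False
    obtain v1 rf C where h: "\<forall>lf acc. Ph lf acc v = phi lf (acc @ v1) rf + C" using Cons.IH by blast
    show ?thesis using False h by (intro exI[of _ "x # v1"] exI[of _ rf] exI[of _ C]) auto
  qed
qed

lemma A_dg: "(l, r) \<in> A_rules \<Longrightarrow> (\<forall>x\<in>set l. dg x) \<and> (\<forall>x\<in>set r. dg x)"
  unfolding A_rules_def dg_def by auto

lemma B_shape: "(l, r) \<in> B_rules \<Longrightarrow> \<exists>l0 r0. l = LM # l0 \<and> r = LM # r0 \<and> (\<forall>x\<in>set l0. dg x) \<and> (\<forall>x\<in>set r0. dg x)"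
  unfolding B_rules_def dg_def by auto

lemma D_shape: "(l, r) \<in> DF_rules \<Longrightarrow> \<exists>l0 r0. l = l0 @ [RM] \<and> r = r0 @ [RM] \<and> (\<forall>x\<in>set l0. dg x) \<and> (\<forall>x\<in>set r0. dg x)"
  unfolding DF_rules_def dg_def
  apply (elim insertE emptyE)
  apply (rule exI[of _ "[O3]"], rule exI[of _ "[]"], simp)
  apply (rule exI[of _ "[Z3,Z2]"], rule exI[of _ "[Z3]"], simp)
  apply (rule exI[of _ "[O3,Z2]"], rule exI[of _ "[O3]"], simp)
  apply (rule exI[of _ "[O3,O2]"], rule exI[of _ "[O3,T3]"], simp)
  apply (rule exI[of _ "[T3,O2]"], rule exI[of _ "[T3,T3]"], simp)
  done

lemma step_dec: "(x, y) \<in> rstep (DF_rules \<union> A_rules \<union> B_rules) \<Longrightarrow> Ph False [] y < Ph False [] x"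
proof -
  assume "(x, y) \<in> rstep (DF_rules \<union> A_rules \<union> B_rules)"
  then obtain u l r v where xy: "x = u @ l @ v" "y = u @ r @ v" and lr: "(l, r) \<in> DF_rules \<union> A_rules \<union> B_rules"
    unfolding rstep_def by blast
  obtain C lf' acc' where L: "\<forall>z. Ph False [] (u @ z) = C + Ph lf' acc' z" using Ph_left by blast
  obtain v1 rf C2 where R: "\<forall>lf acc. Ph lf acc v = phi lf (acc @ v1) rf + C2" using Ph_right by blast
  have "Ph lf' acc' (r @ v) < Ph lf' acc' (l @ v)"
  proof -
    consider "(l, r) \<in> A_rules" | "(l, r) \<in> B_rules" | "(l, r) \<in> DF_rules" using lr by blast
    then show ?thesis
    proof cases
      case 1
      have "Ph lf' acc' (r @ v) = phi lf' (acc' @ r @ v1) rf + C2" using Ph_digits A_dg[OF 1] R by simp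
      also have "\<dots> < phi lf' (acc' @ l @ v1) rf + C2" using phi_A[OF 1] by simp
      also have "\<dots> = Ph lf' acc' (l @ v)" using Ph_digits A_dg[OF 1] R by simp
      finally show ?thesis .
    next
      case 2
      obtain l0 r0 where s: "l = LM # l0" "r = LM # r0" "\<forall>x\<in>set l0. dg x" "\<forall>x\<in>set r0. dg x"
        using B_shape[OF 2] by blast
      have "Ph lf' acc' (r @ v) = phi lf' acc' False + (phi True (r0 @ v1) rf + C2)"
        using s Ph_digits[of r0 True "[]" v] R by simp
      also have "\<dots> < phi lf' acc' False + (phi True (l0 @ v1) rf + C2)" using phi_B 2 s by simp
      also have "\<dots> = Ph lf' acc' (l @ v)" using s Ph_digits[of l0 True "[]" v] R by simp
      finally show ?thesis .
    next
      case 3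
      obtain l0 r0 where s: "l = l0 @ [RM]" "r = r0 @ [RM]" "\<forall>x\<in>set l0. dg x" "\<forall>x\<in>set r0. dg x"
        using D_shape[OF 3] by blast
      have "Ph lf' acc' (r @ v) = phi lf' (acc' @ r0) True + Ph False [] v"
        using s Ph_digits[of r0 lf' acc' "RM # v"] by simp
      also have "\<dots> < phi lf' (acc' @ l0) True + Ph False [] v" using phi_D 3 s by simp
      also have "\<dots> = Ph lf' acc' (l @ v)" using s Ph_digits[of l0 lf' acc' "RM # v"] by simp
      finally show ?thesis .
    qed
  qed
  then show ?thesis using L xy by simp
qed

theorem mainTheorem11:
  shows "terminating (DF_rules \<union> A_rules \<union> B_rules)"
  unfolding terminating_def
proof
  assume "\<exists>f :: nat \<Rightarrow> sym list. \<forall>i. (f i, f (Suc i)) \<in> rstep (DF_rules \<union> A_rules \<union> B_rules)"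
  then obtain f :: "nat \<Rightarrow> sym list" where f: "\<forall>i. (f i, f (Suc i)) \<in> rstep (DF_rules \<union> A_rules \<union> B_rules)" by blast
  have "\<And>i. Ph False [] (f i) + i \<le> Ph False [] (f 0)"
  proof -
    fix i show "Ph False [] (f i) + i \<le> Ph False [] (f 0)"
    proof (induction i)
      case (Suc i) then show ?case using step_dec[OF f[rule_format, of i]] by simp
    qed simp
  qed
  from this[of "Suc (Ph False [] (f 0))"] show False by simp
qed

end
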